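(* Let $h:\mathbb{R}^d\to\mathbb{R}$ be 1-Lipschitz and $P_th(x)=\mathbb{E}h(B^x_t)$, where $B^x_t=x+B_t$ and $B$ is a standard $d$-dimensional Brownian motion. Then for all $x,v,v_1,v_2\in\mathbb{R}^d$ and $t>0$, $$\big|\langle\nabla^2(P_th)(x+v)-\nabla^2(P_th)(x),v_1v_2^T\rangle_{\mathrm{HS}}\big|\le\frac{2|v_1||v_2||v|}{t},\qquad \big|\Delta(P_th)(x+v)-\Delta(P_th)(x)\big|\le\frac{2d}{t}|v|.$$
   Context: $\langle A,B\rangle_{\mathrm{HS}}=\sum_{i,j}A_{ij}B_{ij}$ for $d\times d$ matrices. *)

theory Defs
  imports "HOL-Analysis.Analysis"
begin

text \<open>Heat semigroup: P_t h (x) = E h(x + B_t), with B_t ~ N(0, t I_d),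
  written as integration against the Gaussian density on real^'n (d = CARD('n)).\<close>
definition heat_kernel :: "real \<Rightarrow> real ^ 'n \<Rightarrow> real" where
  "heat_kernel t z = (2 * pi * t) powr (- real CARD('n) / 2) * exp (- (norm z)\<^sup>2 / (2 * t))"

definition heat_sg :: "real \<Rightarrow> (real ^ 'n \<Rightarrow> real) \<Rightarrow> real ^ 'n \<Rightarrow> real" where
  "heat_sg t h x = integral\<^sup>L lborel (\<lambda>y. heat_kernel t (y - x) * h y)"

definition partial :: "'n \<Rightarrow> (real ^ 'n \<Rightarrow> real) \<Rightarrow> real ^ 'n \<Rightarrow> real" where
  "partial i f x = deriv (\<lambda>s. f (x + s *\<^sub>R axis i 1)) 0"

definition hessian :: "(real ^ 'n \<Rightarrow> real) \<Rightarrow> real ^ 'n \<Rightarrow> real ^ 'n ^ 'n" where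
  "hessian f x = (\<chi> i j. partial i (partial j f) x)"

definition laplacian :: "(real ^ 'n \<Rightarrow> real) \<Rightarrow> real ^ 'n \<Rightarrow> real" where
  "laplacian f x = (\<Sum>i\<in>UNIV. hessian f x $ i $ i)"

definition hs_inner :: "real ^ 'n ^ 'n \<Rightarrow> real ^ 'n ^ 'n \<Rightarrow> real" where
  "hs_inner A B = (\<Sum>i\<in>UNIV. \<Sum>j\<in>UNIV. A $ i $ j * B $ i $ j)"

definition outer :: "real ^ 'n \<Rightarrow> real ^ 'n \<Rightarrow> real ^ 'n ^ 'n" where
  "outer u w = (\<chi> i j. u $ i * w $ j)"

end

theory Submission
  imports Defs "HOL-Probability.Distributions"
begin

lemma basis_vec_image: "(Basis :: (real^'n) set) = (\<lambda>k. axis k 1) ` UNIV"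
  by (auto simp: Basis_vec_def)

lemma inj_axis1: "inj (\<lambda>k::'n::finite. axis k (1::real))"
  by (auto simp: inj_def axis_eq_axis)

lemma sum_basis_nth:
  fixes k :: "'n::finite"
  fixes \<omega> :: "real^'n \<Rightarrow> real"
  shows "(\<Sum>b\<in>Basis. \<omega> b *\<^sub>R b) $ k = \<omega> (axis k 1)"
proof -
  have "(\<Sum>b\<in>Basis. \<omega> b *\<^sub>R b) = (\<Sum>j\<in>UNIV. \<omega> (axis j 1) *\<^sub>R (axis j 1 :: real^'n))"
    unfolding basis_vec_image by (subst sum.reindex[OF inj_axis1]) simp
  also have "\<dots> $ k = \<omega> (axis k 1)"
    by (simp add: sum_component axis_def if_distrib cong: if_cong)
  finally show ?thesis .
qed

lemma prod_vec_integral: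
  fixes f :: "'n::finite \<Rightarrow> real \<Rightarrow> real"
  assumes int: "\<And>k. integrable lborel (f k)"
  shows "integrable lborel (\<lambda>z::real^'n. \<Prod>k\<in>UNIV. f k (z$k))"
    and "integral\<^sup>L lborel (\<lambda>z::real^'n. \<Prod>k\<in>UNIV. f k (z$k)) = (\<Prod>k\<in>UNIV. integral\<^sup>L lborel (f k))"
proof -
  have meas[measurable]: "f k \<in> borel_measurable borel" for k
    using int[of k] by (simp add: borel_measurable_integrable)
  have m2: "(\<lambda>z::real^'n. \<Prod>k\<in>UNIV. f k (z$k)) \<in> borel_measurable borel"
    by measurable
  define ax where "ax = (\<lambda>k::'n. axis k (1::real) :: real^'n)"
  define F where "F b = f (inv ax b)" for b
  have Fax: "F (ax k) = f k" for k
    unfolding F_def ax_def using inv_f_f[OF inj_axis1, of k] by simp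
  have eq: "(\<Prod>k\<in>UNIV. f k ((\<Sum>b\<in>Basis. \<omega> b *\<^sub>R b) $ k)) = (\<Prod>b\<in>Basis. F b (\<omega> b))"
    for \<omega> :: "real^'n \<Rightarrow> real"
    unfolding sum_basis_nth unfolding basis_vec_image
    by (subst prod.reindex[OF inj_axis1]) (simp add: Fax[unfolded ax_def])
  have eq': "(\<lambda>\<omega>::real^'n \<Rightarrow> real. \<Prod>k\<in>UNIV. f k ((\<Sum>b\<in>Basis. \<omega> b *\<^sub>R b) $ k)) = (\<lambda>\<omega>. \<Prod>b\<in>Basis. F b (\<omega> b))"
    by (rule ext) (rule eq)
  interpret product_sigma_finite "\<lambda>_. lborel :: real measure" by standard
  have intF: "integrable lborel (F b)" for b unfolding F_def by (rule int)
  have "integrable (\<Pi>\<^sub>M b\<in>Basis. lborel) (\<lambda>\<omega>. \<Prod>b\<in>Basis. F b (\<omega> b))"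
    by (rule product_integrable_prod) (auto intro: intF)
  then have "integrable (\<Pi>\<^sub>M b\<in>Basis. lborel) (\<lambda>\<omega>::real^'n \<Rightarrow> real. \<Prod>k\<in>UNIV. f k ((\<Sum>b\<in>Basis. \<omega> b *\<^sub>R b) $ k))"
    unfolding eq' .
  then show "integrable lborel (\<lambda>z::real^'n. \<Prod>k\<in>UNIV. f k (z$k))"
    apply (subst lborel_eq, subst integrable_distr_eq)
    apply measurable
    done
  have "integral\<^sup>L lborel (\<lambda>z::real^'n. \<Prod>k\<in>UNIV. f k (z$k))
      = integral\<^sup>L (\<Pi>\<^sub>M b\<in>Basis. lborel) (\<lambda>\<omega>. \<Prod>b\<in>Basis. F b (\<omega> b))"
    apply (subst lborel_eq, subst integral_distr)
    apply measurable
    apply (simp only: eq')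
    done
  also have "\<dots> = (\<Prod>b\<in>Basis. integral\<^sup>L lborel (F b))"
    by (rule product_integral_prod) (auto intro: intF)
  also have "\<dots> = (\<Prod>k\<in>UNIV. integral\<^sup>L lborel (f k))"
    unfolding basis_vec_image
    by (subst prod.reindex[OF inj_axis1]) (simp add: Fax[unfolded ax_def])
  finally show "integral\<^sup>L lborel (\<lambda>z::real^'n. \<Prod>k\<in>UNIV. f k (z$k)) = (\<Prod>k\<in>UNIV. integral\<^sup>L lborel (f k))" .
qed

lemma norm_sq_vec: "(norm (z::real^'n::finite))\<^sup>2 = (\<Sum>k\<in>UNIV. (z$k)\<^sup>2)"
  by (subst power2_norm_eq_inner) (simp add: inner_vec_def power2_eq_square)

lemma heat_kernel_prod:
  assumes t: "t > 0"
  shows "heat_kernel t (z::real^'n::finite) = (\<Prod>k\<in>UNIV. normal_density 0 (sqrt t) (z$k))"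
proof -
  have "(\<Prod>k\<in>UNIV. normal_density 0 (sqrt t) (z$k))
      = (\<Prod>k\<in>UNIV. (1 / sqrt (2 * pi * t)) * exp (- (z$k)\<^sup>2 / (2 * t)))"
    using t by (simp add: normal_density_def)
  also have "\<dots> = (1 / sqrt (2 * pi * t)) ^ CARD('n) * exp (\<Sum>k\<in>UNIV. - (z$k)\<^sup>2 / (2 * t))"
    by (simp add: exp_sum prod_dividef power_one_over)
  also have "(\<Sum>k\<in>UNIV. - (z$k)\<^sup>2 / (2 * t)) = - (norm z)\<^sup>2 / (2 * t)"
    by (simp add: norm_sq_vec sum_divide_distrib sum_negf)
  also have "(1 / sqrt (2 * pi * t)) ^ CARD('n) = (2 * pi * t) powr (- real CARD('n) / 2)"
  proof -
    have p: "2 * pi * t > 0" using t by simp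
    have "inverse ((2 * pi * t) powr (1/2)) ^ CARD('n) = ((2 * pi * t) powr (-(1/2))) ^ CARD('n)"
      by (simp add: powr_minus)
    also have "\<dots> = (2 * pi * t) powr (real CARD('n) * (-(1/2)))"
      using t by (intro powr_power) (simp add: order.strict_implies_not_eq[OF t, symmetric])
    also have "\<dots> = (2 * pi * t) powr (- real CARD('n) / 2)" by simp
    finally have e: "(2 * pi * t) powr (- real CARD('n) / 2) = inverse ((2 * pi * t) powr (1/2)) ^ CARD('n)" ..
    have q: "(2 * pi * t) powr (1/2) = sqrt (2 * pi * t)" by (rule powr_half_sqrt) (use p in simp)
    show ?thesis unfolding e q by (simp only: inverse_eq_divide)
  qed
  finally show ?thesis by (simp add: heat_kernel_def)
qed

lemma exp_gauss_prod:
  "exp (- a * (norm (y - x::real^'n::finite))\<^sup>2) = (\<Prod>k\<in>UNIV. exp (- a * (y$k - x$k)\<^sup>2))"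
  by (simp add: norm_sq_vec exp_sum[symmetric] sum_distrib_left)

lemma gauss_integrable:
  assumes a: "a > 0"
  shows "integrable lborel (\<lambda>y::real^'n::finite. exp (- a * (norm (y - x))\<^sup>2))"
proof -
  define \<sigma> where "\<sigma> = sqrt (1 / (2 * a))"
  have s: "\<sigma> > 0" using a by (simp add: \<sigma>_def)
  have s2: "\<sigma>\<^sup>2 = 1 / (2 * a)" using a by (simp add: \<sigma>_def)
  have e: "exp (- a * (s - m)\<^sup>2) = sqrt (2 * pi * \<sigma>\<^sup>2) * normal_density m \<sigma> s" for s m
    using a s by (simp add: normal_density_def s2 field_simps)
  have "integrable lborel (\<lambda>s. exp (- a * (s - m)\<^sup>2))" for m
    unfolding e using s by simp
  then have "integrable lborel (\<lambda>z::real^'n. \<Prod>k\<in>UNIV. exp (- a * (z$k - x$k)\<^sup>2))"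
    by (rule prod_vec_integral(1))
  then show ?thesis by (simp only: exp_gauss_prod)
qed

lemma heat_moment:
  fixes k l :: "'n::finite"
  assumes t: "t > 0"
  shows "integrable lborel (\<lambda>z::real^'n. heat_kernel t z * z$k * z$l)"
    and "integral\<^sup>L lborel (\<lambda>z::real^'n. heat_kernel t z * z$k * z$l) = (if k = l then t else 0)"
proof -
  define f where "f m s = normal_density 0 (sqrt t) s * (if m = k then s else 1) * (if m = l then s else 1)" for m s
  have st: "sqrt t > 0" using t by simp
  have eq: "heat_kernel t z * z$k * z$l = (\<Prod>m\<in>UNIV. f m (z$m))" for z :: "real^'n"
    by (simp add: f_def prod.distrib heat_kernel_prod[OF t] prod.delta)
  have i0: "integrable lborel (normal_density 0 (sqrt t))" by (rule integrable_normal_density[OF st])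
  have i1: "integrable lborel (\<lambda>s. normal_density 0 (sqrt t) s * s)"
    using integrable_normal_moment[OF st, of 0 1] by simp
  have i2: "integrable lborel (\<lambda>s. normal_density 0 (sqrt t) s * s * s)"
    using integrable_normal_moment[OF st, of 0 2] by (simp add: power2_eq_square mult.assoc)
  have int: "integrable lborel (f m)" for m
    using i0 i1 i2 by (cases "m = k"; cases "m = l"; simp add: f_def[abs_def])
  show "integrable lborel (\<lambda>z::real^'n. heat_kernel t z * z$k * z$l)"
    unfolding eq by (rule prod_vec_integral(1)[OF int])
  have "integral\<^sup>L lborel (\<lambda>z::real^'n. heat_kernel t z * z$k * z$l) = (\<Prod>m\<in>UNIV. integral\<^sup>L lborel (f m))"
    unfolding eq by (rule prod_vec_integral(2)[OF int])
  also have "\<dots> = (if k = l then t else 0)"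
  proof (cases "k = l")
    case True
    have "integral\<^sup>L lborel (f m) = (if m = k then t else 1)" for m
    proof (cases "m = k")
      case True
      have "integral\<^sup>L lborel (f m) = integral\<^sup>L lborel (\<lambda>s. normal_density 0 (sqrt t) s * (s - 0) ^ (2 * 1))"
        using True \<open>k = l\<close> by (simp add: f_def[abs_def] power2_eq_square mult.assoc)
      also have "\<dots> = t" using st t by (subst integral_normal_moment_even) (auto simp: field_simps)
      finally show ?thesis using True by simp
    next
      case False
      then show ?thesis using \<open>k = l\<close> st by (simp add: f_def[abs_def] integral_normal_density[OF st])
    qed
    then show ?thesis using True by (simp add: prod.delta)
  next
    case False
    have "integral\<^sup>L lborel (f k) = integral\<^sup>L lborel (\<lambda>s. normal_density 0 (sqrt t) s * (s - 0) ^ (2 * 0 + 1))"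
      using False by (simp add: f_def[abs_def])
    also have "\<dots> = 0" using st by (rule integral_normal_moment_odd)
    finally show ?thesis using False by (auto simp: prod_zero_iff)
  qed
  finally show "integral\<^sup>L lborel (\<lambda>z::real^'n. heat_kernel t z * z$k * z$l) = (if k = l then t else 0)" .
qed

lemma heat_total:
  assumes t: "t > 0"
  shows "integrable lborel (heat_kernel t :: real^'n::finite \<Rightarrow> real)"
    and "integral\<^sup>L lborel (heat_kernel t :: real^'n::finite \<Rightarrow> real) = 1"
proof -
  have st: "sqrt t > 0" using t by simp
  have eq: "heat_kernel t = (\<lambda>z::real^'n. \<Prod>m\<in>UNIV. normal_density 0 (sqrt t) (z$m))"
    by (rule ext) (simp add: heat_kernel_prod[OF t])
  show "integrable lborel (heat_kernel t :: real^'n::finite \<Rightarrow> real)"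
    unfolding eq by (rule prod_vec_integral(1)) (rule integrable_normal_density[OF st])
  show "integral\<^sup>L lborel (heat_kernel t :: real^'n::finite \<Rightarrow> real) = 1"
    unfolding eq by (subst prod_vec_integral(2)) (simp_all add: integrable_normal_density[OF st] integral_normal_density[OF st])
qed

lemma u_exp_bound:
  fixes a u :: real
  assumes a: "a > 0" and u: "u \<ge> 0"
  shows "u * exp (- (a * u)) \<le> 1 / a"
proof -
  have "a * u \<le> exp (a * u)" using exp_ge_add_one_self[of "a*u"] by linarith
  then have "u \<le> exp (a * u) / a" using a by (simp add: field_simps)
  then have "u * exp (- (a * u)) \<le> exp (a * u) / a * exp (- (a * u))"
    by (intro mult_right_mono) auto
  also have "\<dots> = 1 / a" by (simp add: exp_minus field_simps)
  finally show ?thesis .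
qed

lemma lip_abs_bound:
  assumes "1-lipschitz_on UNIV h"
  shows "\<bar>h y\<bar> \<le> \<bar>h x\<bar> + norm (y - x)"
proof -
  have "dist (h y) (h x) \<le> 1 * dist y x" by (rule lipschitz_onD[OF assms]) auto
  then show ?thesis by (simp add: dist_norm dist_real_def)
qed

lemma shift_exp_bound:
  fixes z e :: "'a::real_normed_vector"
  assumes t: "t > 0" and s: "\<bar>s\<bar> \<le> 1" and e: "norm e = 1"
  shows "exp (- (norm (z - s *\<^sub>R e))\<^sup>2 / (4 * t)) \<le> exp (1 / (4 * t)) * exp (- (norm z)\<^sup>2 / (8 * t))"
proof -
  have n1: "norm z \<le> norm (z - s *\<^sub>R e) + \<bar>s\<bar>"
    using norm_triangle_ineq[of "z - s *\<^sub>R e" "s *\<^sub>R e"] e by simp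
  have "(norm z)\<^sup>2 \<le> (norm (z - s *\<^sub>R e) + \<bar>s\<bar>)\<^sup>2"
    using n1 by (intro power_mono) auto
  also have "\<dots> \<le> 2 * (norm (z - s *\<^sub>R e))\<^sup>2 + 2 * s\<^sup>2"
    using sum_squares_bound[of "norm (z - s *\<^sub>R e)" "\<bar>s\<bar>"] by (simp add: power2_sum)
  also have "\<dots> \<le> 2 * (norm (z - s *\<^sub>R e))\<^sup>2 + 2"
    using s abs_square_le_1[of s] by simp
  finally have "(norm z)\<^sup>2 \<le> 2 * (norm (z - s *\<^sub>R e))\<^sup>2 + 2" .
  then have "- (norm (z - s *\<^sub>R e))\<^sup>2 / (4 * t) \<le> 1 / (4 * t) + - (norm z)\<^sup>2 / (8 * t)"
    using t by (simp add: field_simps)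
  then show ?thesis by (simp add: exp_add[symmetric])
qed

lemma poly_exp_bound:
  fixes z :: "'a::real_normed_vector"
  assumes t: "t > 0" and A: "A \<ge> 0"
  shows "(A + norm z) * exp (- (norm z)\<^sup>2 / (8 * t)) \<le> (A + 1 + 16 * t) * exp (- (norm z)\<^sup>2 / (16 * t))"
proof -
  define E where "E = exp (- (norm z)\<^sup>2 / (16 * t))"
  have E0: "E > 0" and E1: "E \<le> 1" using t by (auto simp: E_def)
  have EE: "exp (- (norm z)\<^sup>2 / (8 * t)) = E * E"
    by (simp add: E_def exp_add[symmetric])
  have uE: "(norm z)\<^sup>2 * E \<le> 16 * t"
    using u_exp_bound[of "1 / (16 * t)" "(norm z)\<^sup>2"] t by (simp add: E_def)
  have "2 * norm z \<le> (norm z)\<^sup>2 + 1" using sum_squares_bound[of "norm z" 1] by simp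
  then have nz: "norm z \<le> 1 + (norm z)\<^sup>2" using norm_ge_zero[of z] by linarith
  have "A * (E * E) \<le> A * E" using A E0 E1 by (simp add: mult_left_mono)
  moreover have "norm z * (E * E) \<le> (1 + (norm z)\<^sup>2) * (E * E)"
    using nz E0 by (intro mult_right_mono) auto
  moreover have "(1 + (norm z)\<^sup>2) * (E * E) = E * E + ((norm z)\<^sup>2 * E) * E" by algebra
  moreover have "E * E \<le> E" using E0 E1 by (simp add: mult_le_cancel_right1)
  moreover have "((norm z)\<^sup>2 * E) * E \<le> 16 * t * E" using uE E0 by (intro mult_right_mono) auto
  ultimately have "(A + norm z) * (E * E) \<le> A * E + E + 16 * t * E"
    by (simp add: distrib_right)
  then show ?thesis unfolding EE E_def[symmetric] by (simp add: distrib_right)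
qed

definition kbound :: "real \<Rightarrow> (real^'n::finite \<Rightarrow> real) \<Rightarrow> bool" where
  "kbound t K \<longleftrightarrow> (\<exists>C. \<forall>w. \<bar>K w\<bar> \<le> C * exp (- (norm w)\<^sup>2 / (4 * t)))"

lemma kbound_total_bound:
  fixes K :: "real^'n::finite \<Rightarrow> real"
  assumes t: "t > 0" and lip: "1-lipschitz_on UNIV h" and kb: "\<bar>K w\<bar> \<le> C * exp (- (norm w)\<^sup>2 / (4 * t))"
    and s: "\<bar>s\<bar> \<le> 1" and e: "norm e = 1" and w: "w = y - x - s *\<^sub>R e"
  shows "\<bar>K w * h y\<bar> \<le> C * exp (1 / (4 * t)) * (\<bar>h x\<bar> + 1 + 16 * t) * exp (- (norm (y - x))\<^sup>2 / (16 * t))"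
proof -
  have "0 \<le> C * exp (- (norm w)\<^sup>2 / (4 * t))" using kb abs_ge_zero order_trans by blast
  then have C0: "C \<ge> 0" by (simp add: zero_le_mult_iff)
  have "\<bar>K w * h y\<bar> = \<bar>K w\<bar> * \<bar>h y\<bar>" by (simp add: abs_mult)
  also have "\<dots> \<le> C * exp (- (norm w)\<^sup>2 / (4 * t)) * (\<bar>h x\<bar> + norm (y - x))"
    using kb lip_abs_bound[OF lip, of y x] by (intro mult_mono) auto
  also have "\<dots> \<le> C * (exp (1 / (4 * t)) * exp (- (norm (y - x))\<^sup>2 / (8 * t))) * (\<bar>h x\<bar> + norm (y - x))"
    using shift_exp_bound[OF t s e, of "y - x"] C0 unfolding w
    by (intro mult_right_mono mult_left_mono) auto
  also have "\<dots> = C * exp (1 / (4 * t)) * ((\<bar>h x\<bar> + norm (y - x)) * exp (- (norm (y - x))\<^sup>2 / (8 * t)))"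
    by simp
  also have "\<dots> \<le> C * exp (1 / (4 * t)) * ((\<bar>h x\<bar> + 1 + 16 * t) * exp (- (norm (y - x))\<^sup>2 / (16 * t)))"
    using poly_exp_bound[OF t, of "\<bar>h x\<bar>" "y - x"] C0 by (intro mult_left_mono) auto
  finally show ?thesis by simp
qed

lemma gauss16_integrable:
  assumes t: "t > 0"
  shows "integrable lborel (\<lambda>y::real^'n::finite. M * exp (- (norm (y - x))\<^sup>2 / (16 * t)))"
proof -
  have "integrable lborel (\<lambda>y::real^'n::finite. exp (- (1 / (16 * t)) * (norm (y - x))\<^sup>2))"
    using t by (intro gauss_integrable) simp
  then show ?thesis by simp
qed

lemma kernel_integrable:
  fixes K :: "real^'n::finite \<Rightarrow> real"
  assumes t: "t > 0" and lip: "1-lipschitz_on UNIV h" and kb: "kbound t K"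
    and Km[measurable]: "K \<in> borel_measurable borel"
  shows "integrable lborel (\<lambda>y. K (y - x) * h y)"
proof -
  obtain C where C: "\<And>w. \<bar>K w\<bar> \<le> C * exp (- (norm w)\<^sup>2 / (4 * t))" using kb by (auto simp: kbound_def)
  have hm[measurable]: "h \<in> borel_measurable borel"
    by (rule borel_measurable_continuous_onI) (rule lipschitz_on_continuous_on[OF lip])
  obtain e :: "real^'n" where e: "norm e = 1" using vector_choose_size[of 1] by auto
  show ?thesis
  proof (rule Bochner_Integration.integrable_bound[OF gauss16_integrable[OF t]])
    show "(\<lambda>y. K (y - x) * h y) \<in> borel_measurable lborel" by measurable
    show "AE y in lborel. norm (K (y - x) * h y) \<le> norm (C * exp (1 / (4 * t)) * (\<bar>h x\<bar> + 1 + 16 * t) * exp (- (norm (y - x))\<^sup>2 / (16 * t)))"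
    proof (intro AE_I2)
      fix y :: "real^'n"
      have "\<bar>K (y - x) * h y\<bar> \<le> C * exp (1 / (4 * t)) * (\<bar>h x\<bar> + 1 + 16 * t) * exp (- (norm (y - x))\<^sup>2 / (16 * t))"
        by (rule kbound_total_bound[where s=0 and e=e and w="y - x" and y=y and x=x and K=K and C=C, OF t lip C]) (auto simp: e)
      then show "norm (K (y - x) * h y) \<le> norm (C * exp (1 / (4 * t)) * (\<bar>h x\<bar> + 1 + 16 * t) * exp (- (norm (y - x))\<^sup>2 / (16 * t)))"
        by (simp only: real_norm_def)
    qed
  qed
qed

lemma K_diff_bound:
  fixes K D :: "real^'n::finite \<Rightarrow> real"
  assumes t: "t > 0" and CD: "\<And>w. \<bar>D w\<bar> \<le> CD * exp (- (norm w)\<^sup>2 / (4 * t))" and CD0: "CD \<ge> 0"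
    and e: "norm e = 1"
    and der: "\<And>w r. ((\<lambda>s. K (w - s *\<^sub>R e)) has_real_derivative D (w - r *\<^sub>R e)) (at r)"
    and s: "\<bar>s\<bar> \<le> 1"
  shows "\<bar>K (w - s *\<^sub>R e) - K w\<bar> \<le> CD * exp (1 / (4 * t)) * exp (- (norm w)\<^sup>2 / (8 * t)) * \<bar>s\<bar>"
proof -
  define B where "B = CD * exp (1 / (4 * t)) * exp (- (norm w)\<^sup>2 / (8 * t))"
  have "norm ((\<lambda>r. K (w - r *\<^sub>R e)) s - (\<lambda>r. K (w - r *\<^sub>R e)) 0) \<le> B * norm (s - 0)"
  proof (rule field_differentiable_bound[where S="{-1..1}" and f'="\<lambda>r. D (w - r *\<^sub>R e)"])
    show "convex {-1..1::real}" by simp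
    show "((\<lambda>r. K (w - r *\<^sub>R e)) has_field_derivative D (w - z *\<^sub>R e)) (at z within {-1..1})" for z
      by (rule has_field_derivative_at_within[OF der])
    show "norm (D (w - z *\<^sub>R e)) \<le> B" if "z \<in> {-1..1}" for z
    proof -
      have z1: "\<bar>z\<bar> \<le> 1" using that by auto
      have "\<bar>D (w - z *\<^sub>R e)\<bar> \<le> CD * exp (- (norm (w - z *\<^sub>R e))\<^sup>2 / (4 * t))" by (rule CD)
      also have "\<dots> \<le> CD * (exp (1 / (4 * t)) * exp (- (norm w)\<^sup>2 / (8 * t)))"
        by (rule mult_left_mono[OF shift_exp_bound[OF t z1 e] CD0])
      also have "\<dots> = B" by (simp only: B_def mult.assoc)
      finally show ?thesis by (simp only: real_norm_def)
    qed
    show "s \<in> {-1..1}" "0 \<in> {-1..1::real}" using s by auto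
  qed
  then show ?thesis by (simp add: B_def)
qed

lemma q_bound:
  fixes K D :: "real^'n::finite \<Rightarrow> real"
  assumes t: "t > 0" and lip: "1-lipschitz_on UNIV h"
    and CD: "\<And>w. \<bar>D w\<bar> \<le> CD * exp (- (norm w)\<^sup>2 / (4 * t))" and CD0: "CD \<ge> 0"
    and e: "norm e = 1"
    and der: "\<And>w r. ((\<lambda>s. K (w - s *\<^sub>R e)) has_real_derivative D (w - r *\<^sub>R e)) (at r)"
    and s: "\<bar>s\<bar> \<le> 1"
  shows "\<bar>(K (y - x - s *\<^sub>R e) - K (y - x)) / s * h y\<bar>
    \<le> CD * exp (1 / (4 * t)) * (\<bar>h x\<bar> + 1 + 16 * t) * exp (- (norm (y - x))\<^sup>2 / (16 * t))"
proof (cases "s = 0")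
  case True
  have "0 \<le> CD * exp (1 / (4 * t)) * (\<bar>h x\<bar> + 1 + 16 * t) * exp (- (norm (y - x))\<^sup>2 / (16 * t))"
    using CD0 t by (intro mult_nonneg_nonneg) auto
  then show ?thesis using True by simp
next
  case False
  define w where "w = y - x"
  define B where "B = CD * exp (1 / (4 * t)) * exp (- (norm w)\<^sup>2 / (8 * t))"
  have kd: "\<bar>K (w - s *\<^sub>R e) - K w\<bar> \<le> B * \<bar>s\<bar>"
    unfolding B_def by (rule K_diff_bound[OF t CD CD0 e der s])
  have B0: "B \<ge> 0" unfolding B_def using CD0 by simp
  have sp: "\<bar>s\<bar> > 0" using False by simp
  have "\<bar>(K (y - x - s *\<^sub>R e) - K (y - x)) / s * h y\<bar> = \<bar>K (w - s *\<^sub>R e) - K w\<bar> / \<bar>s\<bar> * \<bar>h y\<bar>"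
    by (simp only: w_def abs_mult abs_divide)
  also have "\<dots> \<le> B * (\<bar>h x\<bar> + norm w)"
  proof (rule mult_mono)
    show "\<bar>K (w - s *\<^sub>R e) - K w\<bar> / \<bar>s\<bar> \<le> B" using kd sp by (simp add: divide_le_eq)
    show "\<bar>h y\<bar> \<le> \<bar>h x\<bar> + norm w" unfolding w_def by (rule lip_abs_bound[OF lip])
  qed (use B0 in auto)
  also have "\<dots> = CD * exp (1 / (4 * t)) * ((\<bar>h x\<bar> + norm w) * exp (- (norm w)\<^sup>2 / (8 * t)))"
    by (simp only: B_def mult_ac)
  also have "\<dots> \<le> CD * exp (1 / (4 * t)) * ((\<bar>h x\<bar> + 1 + 16 * t) * exp (- (norm w)\<^sup>2 / (16 * t)))"
    by (rule mult_left_mono[OF poly_exp_bound[OF t abs_ge_zero]]) (use CD0 in simp)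
  also have "\<dots> = CD * exp (1 / (4 * t)) * (\<bar>h x\<bar> + 1 + 16 * t) * exp (- (norm (y - x))\<^sup>2 / (16 * t))"
    by (simp only: w_def mult_ac)
  finally show ?thesis .
qed

lemma dominated_at0:
  fixes q :: "real \<Rightarrow> 'a \<Rightarrow> real" and f W :: "'a \<Rightarrow> real"
  assumes meas: "\<And>s. q s \<in> borel_measurable M" and fm: "f \<in> borel_measurable M"
    and Wint: "integrable M W"
    and ptw: "\<And>y. ((\<lambda>s. q s y) \<longlongrightarrow> f y) (at 0)"
    and bound: "\<And>s y. \<bar>s\<bar> \<le> 1 \<Longrightarrow> \<bar>q s y\<bar> \<le> W y"
  shows "((\<lambda>s. integral\<^sup>L M (q s)) \<longlongrightarrow> integral\<^sup>L M f) (at 0)"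
proof (subst tendsto_at_iff_sequentially, intro allI impI)
  fix X :: "nat \<Rightarrow> real"
  assume X0: "\<forall>i. X i \<in> UNIV - {0}" and Xl: "X \<longlonglongrightarrow> 0"
  have "\<exists>no. \<forall>n\<ge>no. norm (X n - 0) < 1" by (rule LIMSEQ_D[OF Xl]) simp
  then obtain N where N: "\<And>n. n \<ge> N \<Longrightarrow> norm (X n - 0) < 1" by blast
  have XN: "(\<lambda>n. X (n + N)) \<longlonglongrightarrow> 0" using Xl by (rule LIMSEQ_ignore_initial_segment)
  have XN0: "\<forall>i. X (i + N) \<in> UNIV - {0}" using X0 by blast
  have "(\<lambda>n. integral\<^sup>L M (q (X (n + N)))) \<longlonglongrightarrow> integral\<^sup>L M f"
  proof (rule integral_dominated_convergence[where w=W])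
    show "f \<in> borel_measurable M" by (rule fm)
    show "q (X (n + N)) \<in> borel_measurable M" for n by (rule meas)
    show "integrable M W" by (rule Wint)
    show "AE y in M. (\<lambda>n. q (X (n + N)) y) \<longlonglongrightarrow> f y"
    proof (rule AE_I2)
      fix y
      have "\<forall>X. (\<forall>i. X i \<in> UNIV - {0}) \<longrightarrow> X \<longlonglongrightarrow> 0 \<longrightarrow> ((\<lambda>s. q s y) \<circ> X) \<longlonglongrightarrow> f y"
        using ptw[of y] by (simp only: tendsto_at_iff_sequentially)
      from mp[OF mp[OF spec[OF this, of "\<lambda>n. X (n + N)"] XN0] XN]
      show "(\<lambda>n. q (X (n + N)) y) \<longlonglongrightarrow> f y" by (simp only: comp_def)
    qed
    show "AE y in M. norm (q (X (n + N)) y) \<le> W y" for n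
    proof (rule AE_I2)
      fix y
      have "\<bar>X (n + N)\<bar> \<le> 1" using N[of "n + N"] by simp
      then show "norm (q (X (n + N)) y) \<le> W y" using bound by (simp only: real_norm_def)
    qed
  qed
  then have "(\<lambda>n. integral\<^sup>L M (q (X n))) \<longlonglongrightarrow> integral\<^sup>L M f" by (rule LIMSEQ_offset)
  then show "((\<lambda>s. integral\<^sup>L M (q s)) \<circ> X) \<longlonglongrightarrow> integral\<^sup>L M f" by (simp only: comp_def)
qed

lemma kbound_nonneg:
  fixes K :: "real^'n::finite \<Rightarrow> real"
  assumes "\<And>w. \<bar>K w\<bar> \<le> C * exp (- (norm w)\<^sup>2 / (4 * t))"
  shows "C \<ge> 0"
proof -
  have "\<bar>K 0\<bar> \<le> C * exp (- (norm (0::real^'n))\<^sup>2 / (4 * t))" by (rule assms)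
  then have "0 \<le> C * exp (- (norm (0::real^'n))\<^sup>2 / (4 * t))" by (rule order_trans[OF abs_ge_zero])
  then show ?thesis by (simp add: zero_le_mult_iff)
qed

lemma deriv_under:
  fixes K D :: "real^'n::finite \<Rightarrow> real" and e x :: "real^'n"
  assumes t: "t > 0" and lip: "1-lipschitz_on UNIV h"
    and Km[measurable]: "K \<in> borel_measurable borel" and Dm[measurable]: "D \<in> borel_measurable borel"
    and kK: "kbound t K" and kD: "kbound t D" and e: "norm e = 1"
    and der: "\<And>w r. ((\<lambda>s. K (w - s *\<^sub>R e)) has_real_derivative D (w - r *\<^sub>R e)) (at r)"
  shows "((\<lambda>s. integral\<^sup>L lborel (\<lambda>y. K (y - (x + s *\<^sub>R e)) * h y)) has_real_derivative (integral\<^sup>L lborel (\<lambda>y. D (y - x) * h y))) (at 0)"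
proof -
  obtain CD where CD: "\<And>w. \<bar>D w\<bar> \<le> CD * exp (- (norm w)\<^sup>2 / (4 * t))" using kD by (auto simp: kbound_def)
  have CD0: "CD \<ge> 0" by (rule kbound_nonneg[OF CD])
  have hm[measurable]: "h \<in> borel_measurable borel"
    by (rule borel_measurable_continuous_onI) (rule lipschitz_on_continuous_on[OF lip])
  define W where "W y = CD * exp (1 / (4 * t)) * (\<bar>h x\<bar> + 1 + 16 * t) * exp (- (norm (y - x))\<^sup>2 / (16 * t))" for y
  have W0: "W y \<ge> 0" for y using CD0 t unfolding W_def by (intro mult_nonneg_nonneg) auto
  have Wint: "integrable lborel W" unfolding W_def by (rule gauss16_integrable[OF t])
  define q where "q s y = (K (y - x - s *\<^sub>R e) - K (y - x)) / s * h y" for s y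
  have qm[measurable]: "q s \<in> borel_measurable borel" for s unfolding q_def by measurable
  have int_s: "integrable lborel (\<lambda>y. K (y - (x + s *\<^sub>R e)) * h y)" for s
    by (rule kernel_integrable[OF t lip kK Km])
  have quot: "((integral\<^sup>L lborel (\<lambda>y. K (y - (x + s *\<^sub>R e)) * h y)) - (integral\<^sup>L lborel (\<lambda>y. K (y - (x + 0 *\<^sub>R e)) * h y))) / (s - 0)
      = (integral\<^sup>L lborel (q s))" for s
  proof -
    have "((integral\<^sup>L lborel (\<lambda>y. K (y - (x + s *\<^sub>R e)) * h y)) - (integral\<^sup>L lborel (\<lambda>y. K (y - (x + 0 *\<^sub>R e)) * h y))) / (s - 0)
        = (integral\<^sup>L lborel (\<lambda>y. K (y - (x + s *\<^sub>R e)) * h y - K (y - (x + 0 *\<^sub>R e)) * h y)) / s"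
      by (simp only: Bochner_Integration.integral_diff[OF int_s[of s] int_s[of 0]] diff_0_right)
    also have "\<dots> = (integral\<^sup>L lborel (\<lambda>y. (K (y - (x + s *\<^sub>R e)) * h y - K (y - (x + 0 *\<^sub>R e)) * h y) / s))"
      by (rule integral_divide_zero[symmetric])
    also have "\<dots> = (integral\<^sup>L lborel (q s))"
    proof (rule Bochner_Integration.integral_cong)
      fix y
      have a: "y - (x + s *\<^sub>R e) = y - x - s *\<^sub>R e" "y - (x + 0 *\<^sub>R e) = y - x" by (simp_all add: algebra_simps)
      have b: "(A * H - B * H) / s = (A - B) / s * H" for A B H :: real by (simp add: left_diff_distrib)
      show "(K (y - (x + s *\<^sub>R e)) * h y - K (y - (x + 0 *\<^sub>R e)) * h y) / s = q s y"
        unfolding a b q_def ..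
    qed simp
    finally show ?thesis .
  qed
  have bound: "\<bar>q s y\<bar> \<le> W y" if s: "\<bar>s\<bar> \<le> 1" for s y
    unfolding q_def W_def by (rule q_bound[OF t lip CD CD0 e der s])
  have ptw: "((\<lambda>s. q s y) \<longlongrightarrow> D (y - x) * h y) (at 0)" for y
  proof -
    have "((\<lambda>s. (K (y - x - s *\<^sub>R e) - K (y - x - 0 *\<^sub>R e)) / (s - 0)) \<longlongrightarrow> D (y - x - 0 *\<^sub>R e)) (at 0)"
      using der[of "y - x" 0] by (simp only: has_field_derivative_iff)
    then have "((\<lambda>s. (K (y - x - s *\<^sub>R e) - K (y - x)) / s) \<longlongrightarrow> D (y - x)) (at 0)"
      by (simp only: scale_zero_left diff_zero)
    then show ?thesis unfolding q_def by (rule tendsto_mult_right)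
  qed
  have lim: "((\<lambda>s. integral\<^sup>L lborel (q s)) \<longlongrightarrow> (integral\<^sup>L lborel (\<lambda>y. D (y - x) * h y))) (at 0)"
  proof (rule dominated_at0[where W=W])
    show "q s \<in> borel_measurable lborel" for s by measurable
    show "(\<lambda>y. D (y - x) * h y) \<in> borel_measurable lborel" by measurable
  qed (fact Wint, fact ptw, fact bound)
  show ?thesis unfolding has_field_derivative_iff
  proof (rule Lim_transform_eventually[OF lim])
    show "\<forall>\<^sub>F s in at 0. (integral\<^sup>L lborel (q s)) =
        ((integral\<^sup>L lborel (\<lambda>y. K (y - (x + s *\<^sub>R e)) * h y)) - (integral\<^sup>L lborel (\<lambda>y. K (y - (x + 0 *\<^sub>R e)) * h y))) / (s - 0)"
      by (intro always_eventually allI) (rule quot[symmetric])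
  qed
qed

lemma nsq_axis:
  fixes w :: "real^'n::finite"
  shows "(norm (w - s *\<^sub>R axis i 1))\<^sup>2 = (norm w)\<^sup>2 - 2 * s * (w $ i) + s\<^sup>2"
  by (simp only: power2_norm_eq_inner) (simp add: inner_diff_left inner_diff_right inner_axis inner_axis' inner_axis_axis
      inner_commute[of "axis i 1" w] power2_eq_square algebra_simps)

lemma comp_axis:
  fixes w :: "real^'n::finite"
  shows "(w - s *\<^sub>R axis i 1) $ j = w $ j - s * (if j = i then 1 else 0)"
  by (simp add: axis_def)

definition hc :: "real \<Rightarrow> 'n::finite itself \<Rightarrow> real" where
  "hc t _ = (2 * pi * t) powr (- real CARD('n) / 2)"

lemma heat_kernel_alt: "heat_kernel t (w::real^'n::finite) = hc t TYPE('n) * exp (- (norm w)\<^sup>2 / (2 * t))"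
  by (simp add: heat_kernel_def hc_def)

lemma hc_pos: "t > 0 \<Longrightarrow> hc t TYPE('n::finite) > 0"
  by (simp add: hc_def)

lemma phi_deriv:
  fixes w :: "real^'n::finite"
  assumes t: "t > 0"
  shows "((\<lambda>s. heat_kernel t (w - s *\<^sub>R axis i 1)) has_real_derivative
           heat_kernel t (w - r *\<^sub>R axis i 1) * (w - r *\<^sub>R axis i 1) $ i / t) (at r)"
proof -
  define c where "c = hc t TYPE('n)"
  define N where "N = (norm w)\<^sup>2"
  define a where "a = w $ i"
  have eq: "(\<lambda>s. heat_kernel t (w - s *\<^sub>R axis i 1)) = (\<lambda>s. c * exp (- (N - 2 * s * a + s\<^sup>2) / (2 * t)))"
    by (simp add: heat_kernel_alt nsq_axis c_def N_def a_def)
  have rhs: "heat_kernel t (w - r *\<^sub>R axis i 1) * (w - r *\<^sub>R axis i 1) $ i / t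
      = c * exp (- (N - 2 * r * a + r\<^sup>2) / (2 * t)) * ((a - r) / t)"
    by (simp add: heat_kernel_alt nsq_axis c_def N_def a_def comp_axis)
  have "((\<lambda>s. c * exp (- (N - 2 * s * a + s\<^sup>2) / (2 * t))) has_real_derivative
      c * exp (- (N - 2 * r * a + r\<^sup>2) / (2 * t)) * ((a - r) / t)) (at r)"
    using t by (auto intro!: derivative_eq_intros simp: power2_eq_square field_simps)
  then show ?thesis unfolding eq rhs .
qed

definition K1 :: "real \<Rightarrow> 'n \<Rightarrow> real^'n::finite \<Rightarrow> real" where
  "K1 t j w = heat_kernel t w * w $ j / t"

definition K2 :: "real \<Rightarrow> 'n \<Rightarrow> 'n \<Rightarrow> real^'n::finite \<Rightarrow> real" where
  "K2 t i j w = heat_kernel t w * (w $ i * w $ j / t\<^sup>2 - (if i = j then 1 / t else 0))"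

lemma K1_deriv:
  fixes w :: "real^'n::finite"
  assumes t: "t > 0"
  shows "((\<lambda>s. K1 t j (w - s *\<^sub>R axis i 1)) has_real_derivative K2 t i j (w - r *\<^sub>R axis i 1)) (at r)"
proof -
  define \<delta> :: real where "\<delta> = (if j = i then 1 else 0)"
  have eq: "(\<lambda>s. K1 t j (w - s *\<^sub>R axis i 1)) = (\<lambda>s. heat_kernel t (w - s *\<^sub>R axis i 1) * ((w $ j - s * \<delta>) / t))"
    by (simp add: K1_def axis_def \<delta>_def)
  have "((\<lambda>s. heat_kernel t (w - s *\<^sub>R axis i 1) * ((w $ j - s * \<delta>) / t)) has_real_derivative
      heat_kernel t (w - r *\<^sub>R axis i 1) * (w - r *\<^sub>R axis i 1) $ i / t * ((w $ j - r * \<delta>) / t)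
      + heat_kernel t (w - r *\<^sub>R axis i 1) * (- \<delta> / t)) (at r)"
    using t by (auto intro!: derivative_eq_intros phi_deriv simp: field_simps)
  moreover have "heat_kernel t (w - r *\<^sub>R axis i 1) * (w - r *\<^sub>R axis i 1) $ i / t * ((w $ j - r * \<delta>) / t)
      + heat_kernel t (w - r *\<^sub>R axis i 1) * (- \<delta> / t) = K2 t i j (w - r *\<^sub>R axis i 1)"
    using t by (cases "j = i") (simp_all add: K2_def axis_def \<delta>_def power2_eq_square field_simps)
  ultimately show ?thesis unfolding eq by simp
qed


lemma exp_bounds:
  fixes u t :: real
  assumes t: "t > 0" and u: "u \<ge> 0"
  shows "exp (- u\<^sup>2 / (2 * t)) \<le> exp (- u\<^sup>2 / (4 * t))"
    and "exp (- u\<^sup>2 / (2 * t)) * u \<le> (1 + 4 * t) * exp (- u\<^sup>2 / (4 * t))"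
    and "exp (- u\<^sup>2 / (2 * t)) * u\<^sup>2 \<le> 4 * t * exp (- u\<^sup>2 / (4 * t))"
proof -
  define E where "E = exp (- u\<^sup>2 / (4 * t))"
  have E0: "E > 0" and E1: "E \<le> 1" using t by (auto simp: E_def)
  have EE: "exp (- u\<^sup>2 / (2 * t)) = E * E" by (simp add: E_def exp_add[symmetric])
  have uE: "u\<^sup>2 * E \<le> 4 * t"
    using u_exp_bound[of "1 / (4 * t)" "u\<^sup>2"] t by (simp add: E_def)
  have "u\<^sup>2 / (4 * t) \<le> u\<^sup>2 / (2 * t)" using t by (intro divide_left_mono) auto
  then show "exp (- u\<^sup>2 / (2 * t)) \<le> exp (- u\<^sup>2 / (4 * t))" by simp
  have c: "E * E * u\<^sup>2 \<le> 4 * t * E"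
  proof -
    have "E * E * u\<^sup>2 = (u\<^sup>2 * E) * E" by (simp add: mult_ac)
    also have "\<dots> \<le> 4 * t * E" using uE E0 by (intro mult_right_mono) auto
    finally show ?thesis .
  qed
  then show "exp (- u\<^sup>2 / (2 * t)) * u\<^sup>2 \<le> 4 * t * exp (- u\<^sup>2 / (4 * t))" unfolding EE E_def[symmetric] .
  have "2 * u \<le> u\<^sup>2 + 1" using sum_squares_bound[of u 1] by simp
  then have nu: "u \<le> 1 + u\<^sup>2" using u by linarith
  have "E * E * u \<le> E * E * (1 + u\<^sup>2)" using nu E0 by (intro mult_left_mono) auto
  also have "\<dots> = E * E + E * E * u\<^sup>2" by (simp add: algebra_simps)
  also have "\<dots> \<le> E + 4 * t * E"
  proof -
    have "E * E \<le> E" using E0 E1 by (simp add: mult_le_cancel_left1)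
    then show ?thesis using c by linarith
  qed
  finally show "exp (- u\<^sup>2 / (2 * t)) * u \<le> (1 + 4 * t) * exp (- u\<^sup>2 / (4 * t))"
    unfolding EE E_def[symmetric] by (simp add: algebra_simps)
qed

lemma kbound_phi: "t > 0 \<Longrightarrow> kbound t (heat_kernel t :: real^'n::finite \<Rightarrow> real)"
  unfolding kbound_def
proof (intro exI allI)
  fix w :: "real^'n" assume t: "t > 0"
  have c: "hc t TYPE('n) > 0" by (rule hc_pos[OF t])
  have "\<bar>heat_kernel t w\<bar> = hc t TYPE('n) * exp (- (norm w)\<^sup>2 / (2 * t))"
    by (simp add: heat_kernel_alt abs_mult abs_of_pos[OF c])
  also have "\<dots> \<le> hc t TYPE('n) * exp (- (norm w)\<^sup>2 / (4 * t))"
    using c exp_bounds(1)[OF t norm_ge_zero[of w]] by (intro mult_left_mono) auto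
  finally show "\<bar>heat_kernel t w\<bar> \<le> hc t TYPE('n) * exp (- (norm w)\<^sup>2 / (4 * t))" .
qed

lemma kbound_K1: "t > 0 \<Longrightarrow> kbound t (K1 t j :: real^'n::finite \<Rightarrow> real)"
  unfolding kbound_def
proof (intro exI allI)
  fix w :: "real^'n" assume t: "t > 0"
  have c: "hc t TYPE('n) > 0" by (rule hc_pos[OF t])
  have "\<bar>K1 t j w\<bar> = hc t TYPE('n) / t * (exp (- (norm w)\<^sup>2 / (2 * t)) * \<bar>w $ j\<bar>)"
    using c t by (simp add: K1_def heat_kernel_alt abs_mult abs_divide)
  also have "\<dots> \<le> hc t TYPE('n) / t * (exp (- (norm w)\<^sup>2 / (2 * t)) * norm w)"
    using c t component_le_norm_cart[of w j] by (intro mult_left_mono) auto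
  also have "\<dots> \<le> hc t TYPE('n) / t * ((1 + 4 * t) * exp (- (norm w)\<^sup>2 / (4 * t)))"
    using c t exp_bounds(2)[OF t norm_ge_zero[of w]] by (intro mult_left_mono) auto
  finally show "\<bar>K1 t j w\<bar> \<le> hc t TYPE('n) / t * (1 + 4 * t) * exp (- (norm w)\<^sup>2 / (4 * t))"
    by (simp add: mult_ac)
qed

lemma kbound_K2: "t > 0 \<Longrightarrow> kbound t (K2 t i j :: real^'n::finite \<Rightarrow> real)"
  unfolding kbound_def
proof (intro exI allI)
  fix w :: "real^'n" assume t: "t > 0"
  have c: "hc t TYPE('n) > 0" by (rule hc_pos[OF t])
  define F where "F = exp (- (norm w)\<^sup>2 / (2 * t))"
  have F0: "F \<ge> 0" by (simp add: F_def)
  have "\<bar>w $ i * w $ j / t\<^sup>2 - (if i = j then 1 / t else 0)\<bar> \<le> (norm w)\<^sup>2 / t\<^sup>2 + 1 / t"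
  proof -
    have "\<bar>w $ i * w $ j\<bar> \<le> norm w * norm w"
      unfolding abs_mult by (intro mult_mono component_le_norm_cart) auto
    then have "\<bar>w $ i * w $ j / t\<^sup>2\<bar> \<le> (norm w)\<^sup>2 / t\<^sup>2"
      using t by (simp add: abs_divide power2_eq_square divide_right_mono)
    moreover have "\<bar>(if i = j then 1 / t else 0)\<bar> \<le> 1 / t" using t by simp
    ultimately show ?thesis by (smt (verit))
  qed
  moreover have "\<bar>K2 t i j w\<bar> = hc t TYPE('n) * F * \<bar>w $ i * w $ j / t\<^sup>2 - (if i = j then 1 / t else 0)\<bar>"
    unfolding K2_def heat_kernel_alt F_def[symmetric] abs_mult abs_of_pos[OF c] abs_of_nonneg[OF F0] ..
  ultimately have "\<bar>K2 t i j w\<bar> \<le> hc t TYPE('n) * F * ((norm w)\<^sup>2 / t\<^sup>2 + 1 / t)"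
    using c F0 by (simp add: mult_left_mono)
  also have "\<dots> = hc t TYPE('n) * ((F * (norm w)\<^sup>2) / t\<^sup>2 + F / t)"
    by (simp add: algebra_simps)
  also have "\<dots> \<le> hc t TYPE('n) * ((4 * t * exp (- (norm w)\<^sup>2 / (4 * t))) / t\<^sup>2 + exp (- (norm w)\<^sup>2 / (4 * t)) / t)"
    using c t exp_bounds(1,3)[OF t norm_ge_zero[of w]] unfolding F_def
    by (intro mult_left_mono add_mono divide_right_mono) auto
  also have "\<dots> = hc t TYPE('n) * 5 / t * exp (- (norm w)\<^sup>2 / (4 * t))"
    using t by (simp add: power2_eq_square field_simps)
  finally show "\<bar>K2 t i j w\<bar> \<le> hc t TYPE('n) * 5 / t * exp (- (norm w)\<^sup>2 / (4 * t))" .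
qed

lemma meas_phi[measurable]: "heat_kernel t \<in> borel_measurable (borel :: (real^'n::finite) measure)"
  unfolding heat_kernel_def[abs_def] by measurable

lemma meas_K1[measurable]: "K1 t j \<in> borel_measurable (borel :: (real^'n::finite) measure)"
  unfolding K1_def[abs_def] by measurable

lemma meas_K2[measurable]: "K2 t i j \<in> borel_measurable (borel :: (real^'n::finite) measure)"
  unfolding K2_def[abs_def] by measurable

definition Ik :: "(real^'n::finite \<Rightarrow> real) \<Rightarrow> (real^'n \<Rightarrow> real) \<Rightarrow> real^'n \<Rightarrow> real" where
  "Ik K h x = integral\<^sup>L lborel (\<lambda>y. K (y - x) * h y)"

lemma partial_Ik:
  fixes K D :: "real^'n::finite \<Rightarrow> real"
  assumes t: "t > 0" and lip: "1-lipschitz_on UNIV h"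
    and Km: "K \<in> borel_measurable borel" and Dm: "D \<in> borel_measurable borel"
    and kK: "kbound t K" and kD: "kbound t D"
    and der: "\<And>w r. ((\<lambda>s. K (w - s *\<^sub>R axis i 1)) has_real_derivative D (w - r *\<^sub>R axis i 1)) (at r)"
  shows "partial i (Ik K h) x = Ik D h x"
  unfolding partial_def Ik_def
  by (rule DERIV_imp_deriv, rule deriv_under[OF t lip Km Dm kK kD _ der]) simp

lemma heat_sg_Ik: "heat_sg t h = Ik (heat_kernel t) h"
  by (simp add: heat_sg_def Ik_def fun_eq_iff)

lemma hessian_formula:
  fixes h :: "real^'n::finite \<Rightarrow> real"
  assumes t: "t > 0" and lip: "1-lipschitz_on UNIV h"
  shows "hessian (heat_sg t h) x $ i $ j = Ik (K2 t i j) h x"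
proof -
  have "partial j (heat_sg t h) = Ik (K1 t j) h"
    unfolding heat_sg_Ik fun_eq_iff
    by (intro allI partial_Ik[OF t lip] kbound_phi kbound_K1 t meas_phi meas_K1)
      (unfold K1_def, rule phi_deriv[OF t])
  then show ?thesis
    unfolding hessian_def
    by (simp, intro partial_Ik[OF t lip] kbound_K1 kbound_K2 t meas_K1 meas_K2 K1_deriv)
qed

lemma integral_translate:
  fixes f :: "real^'n::finite \<Rightarrow> real"
  assumes [measurable]: "f \<in> borel_measurable borel"
  shows "integral\<^sup>L lborel f = integral\<^sup>L lborel (\<lambda>z. f (p + z))"
proof -
  have "integral\<^sup>L lborel f = integral\<^sup>L (distr lborel borel ((+) p)) f"
    by (simp add: lborel_distr_plus)
  also have "\<dots> = integral\<^sup>L lborel (\<lambda>z. f (p + z))"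
    by (rule integral_distr) auto
  finally show ?thesis .
qed

lemma lip_shift:
  fixes h :: "real^'n::finite \<Rightarrow> real"
  assumes lip: "1-lipschitz_on UNIV h"
  shows "1-lipschitz_on UNIV (\<lambda>y. h (p + y))"
proof (rule lipschitz_onI)
  fix a b
  have "dist (h (p + a)) (h (p + b)) \<le> 1 * dist (p + a) (p + b)" by (rule lipschitz_onD[OF lip]) auto
  then show "dist (h (p + a)) (h (p + b)) \<le> 1 * dist a b" using dist_add_cancel[of p a b] by simp
qed simp

lemma Ik_translate:
  fixes K :: "real^'n::finite \<Rightarrow> real"
  assumes lip: "1-lipschitz_on UNIV h" and [measurable]: "K \<in> borel_measurable borel"
  shows "Ik K h p = integral\<^sup>L lborel (\<lambda>z. K z * h (p + z))"
proof -
  have hm[measurable]: "h \<in> borel_measurable borel"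
    by (rule borel_measurable_continuous_onI) (rule lipschitz_on_continuous_on[OF lip])
  show ?thesis unfolding Ik_def by (subst integral_translate[where p=p]) auto
qed

lemma Ik_translate_int:
  fixes K :: "real^'n::finite \<Rightarrow> real"
  assumes t: "t > 0" and lip: "1-lipschitz_on UNIV h" and kK: "kbound t K" and [measurable]: "K \<in> borel_measurable borel"
  shows "integrable lborel (\<lambda>z. K z * h (p + z))"
  using kernel_integrable[OF t lip_shift[OF lip, of p] kK, of 0] by simp

lemma heat_quad:
  fixes u :: "real^'n::finite"
  assumes t: "t > 0"
  shows "integrable lborel (\<lambda>z::real^'n. heat_kernel t z * (z \<bullet> u)\<^sup>2)"
    and "integral\<^sup>L lborel (\<lambda>z::real^'n. heat_kernel t z * (z \<bullet> u)\<^sup>2) = t * (norm u)\<^sup>2"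
proof -
  have eq: "heat_kernel t z * (z \<bullet> u)\<^sup>2 = (\<Sum>k\<in>UNIV. \<Sum>l\<in>UNIV. (u $ k * u $ l) * (heat_kernel t z * z $ k * z $ l))" for z :: "real^'n"
    by (simp add: inner_vec_def power2_eq_square sum_product sum_distrib_left mult_ac)
  show "integrable lborel (\<lambda>z::real^'n. heat_kernel t z * (z \<bullet> u)\<^sup>2)"
    unfolding eq by (intro Bochner_Integration.integrable_sum Bochner_Integration.integrable_mult_right heat_moment(1)[OF t])
  have "integral\<^sup>L lborel (\<lambda>z::real^'n. heat_kernel t z * (z \<bullet> u)\<^sup>2)
      = (\<Sum>k\<in>UNIV. \<Sum>l\<in>UNIV. (u $ k * u $ l) * integral\<^sup>L lborel (\<lambda>z::real^'n. heat_kernel t z * z $ k * z $ l))"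
    unfolding eq
    by (simp add: Bochner_Integration.integral_sum heat_moment(1)[OF t])
  also have "\<dots> = (\<Sum>k\<in>UNIV. \<Sum>l\<in>UNIV. (u $ k * u $ l) * (if k = l then t else 0))"
    by (simp add: heat_moment(2)[OF t])
  also have "\<dots> = t * (\<Sum>k\<in>UNIV. (u $ k)\<^sup>2)"
    by (simp add: sum_distrib_left power2_eq_square mult_ac if_distrib cong: if_cong)
  also have "\<dots> = t * (norm u)\<^sup>2" by (simp only: norm_sq_vec)
  finally show "integral\<^sup>L lborel (\<lambda>z::real^'n. heat_kernel t z * (z \<bullet> u)\<^sup>2) = t * (norm u)\<^sup>2" .
qed

lemma Q_formula:
  fixes z v1 v2 :: "real^'n::finite"
  shows "(\<Sum>i\<in>UNIV. \<Sum>j\<in>UNIV. K2 t i j z * (v1 $ i * v2 $ j))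
    = heat_kernel t z * ((z \<bullet> v1) * (z \<bullet> v2) / t\<^sup>2 - (v1 \<bullet> v2) / t)"
proof -
  have "(\<Sum>i\<in>UNIV. \<Sum>j\<in>UNIV. K2 t i j z * (v1 $ i * v2 $ j))
      = (\<Sum>i\<in>UNIV. \<Sum>j\<in>UNIV. heat_kernel t z / t\<^sup>2 * ((z $ i * v1 $ i) * (z $ j * v2 $ j)))
        - (\<Sum>i\<in>UNIV. \<Sum>j\<in>UNIV. (if i = j then heat_kernel t z / t * (v1 $ i * v2 $ j) else 0))"
    unfolding sum_subtractf[symmetric]
    by (intro sum.cong refl) (simp add: K2_def algebra_simps)
  also have "\<dots> = heat_kernel t z / t\<^sup>2 * ((z \<bullet> v1) * (z \<bullet> v2)) - heat_kernel t z / t * (v1 \<bullet> v2)"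
  proof -
    have s1: "(\<Sum>i\<in>UNIV. \<Sum>j\<in>UNIV. heat_kernel t z / t\<^sup>2 * ((z $ i * v1 $ i) * (z $ j * v2 $ j)))
        = heat_kernel t z / t\<^sup>2 * ((z \<bullet> v1) * (z \<bullet> v2))"
      by (simp only: inner_vec_def inner_real_def sum_product) (simp only: sum_distrib_left)
    have s2: "(\<Sum>i\<in>UNIV. \<Sum>j\<in>UNIV. (if i = j then heat_kernel t z / t * (v1 $ i * v2 $ j) else 0))
        = heat_kernel t z / t * (v1 \<bullet> v2)"
      by (simp add: inner_vec_def sum_distrib_left)
    show ?thesis unfolding s1 s2 ..
  qed
  also have "\<dots> = heat_kernel t z * ((z \<bullet> v1) * (z \<bullet> v2) / t\<^sup>2 - (v1 \<bullet> v2) / t)"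
    by (simp add: algebra_simps)
  finally show ?thesis .
qed

lemma am_gm_abs:
  fixes a b \<alpha> :: real
  assumes "\<alpha> > 0"
  shows "\<bar>a * b\<bar> \<le> \<alpha> / 2 * a\<^sup>2 + 1 / (2 * \<alpha>) * b\<^sup>2"
proof -
  have "2 * (\<alpha> * \<bar>a\<bar>) * \<bar>b\<bar> \<le> (\<alpha> * \<bar>a\<bar>)\<^sup>2 + \<bar>b\<bar>\<^sup>2" by (rule sum_squares_bound)
  then have "2 * \<alpha> * \<bar>a * b\<bar> \<le> \<alpha> * (\<alpha> * a\<^sup>2) + b\<^sup>2"
    by (simp add: abs_mult power2_eq_square mult_ac)
  then have "\<bar>a * b\<bar> \<le> (\<alpha> * (\<alpha> * a\<^sup>2) + b\<^sup>2) / (2 * \<alpha>)"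
    using assms by (simp add: le_divide_eq mult_ac)
  also have "\<dots> = \<alpha> / 2 * a\<^sup>2 + 1 / (2 * \<alpha>) * b\<^sup>2"
    using assms by (simp add: field_simps power2_eq_square)
  finally show ?thesis .
qed

lemma pointwise_bound:
  fixes z v1 v2 :: "real^'n::finite"
  assumes t: "t > 0" and al: "\<alpha> > 0" and D: "\<bar>\<Delta>\<bar> \<le> nv"
  shows "\<bar>heat_kernel t z * ((z \<bullet> v1) * (z \<bullet> v2) / t\<^sup>2 - (v1 \<bullet> v2) / t) * \<Delta>\<bar>
    \<le> nv * \<alpha> / (2 * t\<^sup>2) * (heat_kernel t z * (z \<bullet> v1)\<^sup>2) + nv / (2 * \<alpha> * t\<^sup>2) * (heat_kernel t z * (z \<bullet> v2)\<^sup>2)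
       + nv * norm v1 * norm v2 / t * heat_kernel t z"
proof -
  have p0: "heat_kernel t z \<ge> 0" unfolding heat_kernel_def by simp
  have nv0: "nv \<ge> 0" using D by linarith
  have "\<bar>(z \<bullet> v1) * (z \<bullet> v2) / t\<^sup>2 - (v1 \<bullet> v2) / t\<bar> \<le> \<bar>(z \<bullet> v1) * (z \<bullet> v2)\<bar> / t\<^sup>2 + \<bar>v1 \<bullet> v2\<bar> / t"
    using abs_triangle_ineq4[of "(z \<bullet> v1) * (z \<bullet> v2) / t\<^sup>2" "(v1 \<bullet> v2) / t"] t by (simp add: abs_divide)
  also have "\<dots> \<le> (\<alpha> / 2 * (z \<bullet> v1)\<^sup>2 + 1 / (2 * \<alpha>) * (z \<bullet> v2)\<^sup>2) / t\<^sup>2 + norm v1 * norm v2 / t"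
    using t by (intro add_mono divide_right_mono am_gm_abs[OF al] Cauchy_Schwarz_ineq2) auto
  finally have B: "\<bar>(z \<bullet> v1) * (z \<bullet> v2) / t\<^sup>2 - (v1 \<bullet> v2) / t\<bar>
      \<le> (\<alpha> / 2 * (z \<bullet> v1)\<^sup>2 + 1 / (2 * \<alpha>) * (z \<bullet> v2)\<^sup>2) / t\<^sup>2 + norm v1 * norm v2 / t" .
  have "\<bar>heat_kernel t z * ((z \<bullet> v1) * (z \<bullet> v2) / t\<^sup>2 - (v1 \<bullet> v2) / t) * \<Delta>\<bar>
      = heat_kernel t z * \<bar>(z \<bullet> v1) * (z \<bullet> v2) / t\<^sup>2 - (v1 \<bullet> v2) / t\<bar> * \<bar>\<Delta>\<bar>"
    using p0 by (simp add: abs_mult)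
  also have "\<dots> \<le> heat_kernel t z * ((\<alpha> / 2 * (z \<bullet> v1)\<^sup>2 + 1 / (2 * \<alpha>) * (z \<bullet> v2)\<^sup>2) / t\<^sup>2 + norm v1 * norm v2 / t) * nv"
    using B D p0 by (intro mult_mono mult_left_mono) auto
  also have "\<dots> = nv * \<alpha> / (2 * t\<^sup>2) * (heat_kernel t z * (z \<bullet> v1)\<^sup>2) + nv / (2 * \<alpha> * t\<^sup>2) * (heat_kernel t z * (z \<bullet> v2)\<^sup>2)
       + nv * norm v1 * norm v2 / t * heat_kernel t z"
    using t al by (simp add: field_simps)
  finally show ?thesis .
qed

lemma main_hs:
  fixes h :: "real^'n::finite \<Rightarrow> real" and x v v1 v2 :: "real^'n"
  assumes lip: "1-lipschitz_on UNIV h" and t: "t > 0"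
  shows "\<bar>hs_inner (hessian (heat_sg t h) (x + v) - hessian (heat_sg t h) x) (outer v1 v2)\<bar>
           \<le> 2 * norm v1 * norm v2 * norm v / t"
proof (cases "v1 = 0 \<or> v2 = 0")
  case True
  then have "outer v1 v2 = 0" by (auto simp: outer_def vec_eq_iff)
  then show ?thesis using True by (auto simp: hs_inner_def)
next
  case False
  have hm[measurable]: "h \<in> borel_measurable borel"
    by (rule borel_measurable_continuous_onI) (rule lipschitz_on_continuous_on[OF lip])
  define \<Delta> where "\<Delta> z = h (x + v + z) - h (x + z)" for z
  define QQ where "QQ z = heat_kernel t z * ((z \<bullet> v1) * (z \<bullet> v2) / t\<^sup>2 - (v1 \<bullet> v2) / t)" for z :: "real^'n"
  have int: "integrable lborel (\<lambda>z. K2 t i j z * h (p + z))" for i j p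
    by (rule Ik_translate_int[OF t lip kbound_K2[OF t] meas_K2])
  have HI: "hessian (heat_sg t h) p $ i $ j = integral\<^sup>L lborel (\<lambda>z. K2 t i j z * h (p + z))" for p i j
    using hessian_formula[OF t lip] Ik_translate[OF lip meas_K2] by simp
  define T where "T i j z = (K2 t i j z * h (x + v + z) - K2 t i j z * h (x + z)) * (v1 $ i * v2 $ j)" for i j z
  have intT: "integrable lborel (T i j)" for i j
    unfolding T_def by (intro Bochner_Integration.integrable_mult_left Bochner_Integration.integrable_diff int)
  have "hs_inner (hessian (heat_sg t h) (x + v) - hessian (heat_sg t h) x) (outer v1 v2)
      = (\<Sum>i\<in>UNIV. \<Sum>j\<in>UNIV. integral\<^sup>L lborel (T i j))"
    unfolding hs_inner_def outer_def
    by (intro sum.cong refl) (simp add: HI T_def[abs_def] Bochner_Integration.integral_diff[OF int int])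
  also have "\<dots> = integral\<^sup>L lborel (\<lambda>z. \<Sum>i\<in>UNIV. \<Sum>j\<in>UNIV. T i j z)"
    by (simp add: Bochner_Integration.integral_sum intT)
  also have "(\<lambda>z. \<Sum>i\<in>UNIV. \<Sum>j\<in>UNIV. T i j z) = (\<lambda>z. QQ z * \<Delta> z)"
  proof
    fix z
    have "(\<Sum>i\<in>UNIV. \<Sum>j\<in>UNIV. T i j z) = (\<Sum>i\<in>UNIV. \<Sum>j\<in>UNIV. K2 t i j z * (v1 $ i * v2 $ j) * \<Delta> z)"
      by (simp add: T_def \<Delta>_def algebra_simps)
    also have "\<dots> = (\<Sum>i\<in>UNIV. \<Sum>j\<in>UNIV. K2 t i j z * (v1 $ i * v2 $ j)) * \<Delta> z"
      by (simp add: sum_distrib_right)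
    also have "\<dots> = QQ z * \<Delta> z" by (simp add: Q_formula QQ_def)
    finally show "(\<Sum>i\<in>UNIV. \<Sum>j\<in>UNIV. T i j z) = QQ z * \<Delta> z" .
  qed
  finally have eqI: "hs_inner (hessian (heat_sg t h) (x + v) - hessian (heat_sg t h) x) (outer v1 v2)
      = integral\<^sup>L lborel (\<lambda>z. QQ z * \<Delta> z)" .
  have intQ: "integrable lborel (\<lambda>z. QQ z * \<Delta> z)"
  proof -
    have "integrable lborel (\<lambda>z. \<Sum>i\<in>UNIV. \<Sum>j\<in>UNIV. T i j z)"
      by (intro Bochner_Integration.integrable_sum intT)
    also have "(\<lambda>z. \<Sum>i\<in>UNIV. \<Sum>j\<in>UNIV. T i j z) = (\<lambda>z. QQ z * \<Delta> z)" by fact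
    finally show ?thesis .
  qed
  have n1: "norm v1 > 0" and n2: "norm v2 > 0" using False by auto
  define \<alpha> where "\<alpha> = norm v2 / norm v1"
  have al: "\<alpha> > 0" using n1 n2 by (simp add: \<alpha>_def)
  define R where "R z = norm v * \<alpha> / (2 * t\<^sup>2) * (heat_kernel t z * (z \<bullet> v1)\<^sup>2)
     + norm v / (2 * \<alpha> * t\<^sup>2) * (heat_kernel t z * (z \<bullet> v2)\<^sup>2)
     + norm v * norm v1 * norm v2 / t * heat_kernel t z" for z :: "real^'n"
  have intR: "integrable lborel R"
    unfolding R_def
    by (intro Bochner_Integration.integrable_add Bochner_Integration.integrable_mult_right heat_quad(1)[OF t] heat_total(1)[OF t])
  have Dz: "\<bar>\<Delta> z\<bar> \<le> norm v" for z
  proof -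
    have "dist (h (x + v + z)) (h (x + z)) \<le> 1 * dist (x + v + z) (x + z)"
      by (rule lipschitz_onD[OF lip]) auto
    moreover have "dist (x + v + z) (x + z) = norm v" by (simp add: dist_norm algebra_simps)
    ultimately show ?thesis by (simp add: \<Delta>_def dist_real_def)
  qed
  have "\<bar>integral\<^sup>L lborel (\<lambda>z. QQ z * \<Delta> z)\<bar> \<le> integral\<^sup>L lborel R"
  proof (rule integral_abs_bound_integral[OF intQ intR])
    fix z :: "real^'n"
    show "\<bar>QQ z * \<Delta> z\<bar> \<le> R z"
      unfolding QQ_def R_def by (rule pointwise_bound[OF t al Dz])
  qed
  also have "integral\<^sup>L lborel R = norm v * \<alpha> / (2 * t\<^sup>2) * (t * (norm v1)\<^sup>2)
     + norm v / (2 * \<alpha> * t\<^sup>2) * (t * (norm v2)\<^sup>2) + norm v * norm v1 * norm v2 / t * 1"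
    unfolding R_def
    by (simp add: Bochner_Integration.integral_add heat_quad[OF t] heat_total[OF t])
  also have "\<dots> = 2 * norm v1 * norm v2 * norm v / t"
    using n1 n2 t by (simp add: \<alpha>_def field_simps power2_eq_square)
  finally show ?thesis unfolding eqI .
qed

lemma hs_axis: "hs_inner M (outer (axis i 1) (axis i 1)) = M $ i $ i"
proof -
  have r: "(\<Sum>l\<in>UNIV. M $ k $ l * (outer (axis i 1) (axis i 1) $ k $ l)) = (if k = i then M $ k $ i else 0)" for k
    by (cases "k = i") (simp_all add: outer_def axis_def mult.commute[of "M $ _ $ _"] if_distrib[of "\<lambda>a. a * _"] cong: if_cong)
  show ?thesis unfolding hs_inner_def r by simp
qed

theorem lemma4p9:
  fixes h :: "real ^ 'n \<Rightarrow> real" and x v v1 v2 :: "real ^ 'n" and t :: real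
  assumes "1-lipschitz_on UNIV h" and "t > 0"
  shows "\<bar>hs_inner (hessian (heat_sg t h) (x + v) - hessian (heat_sg t h) x) (outer v1 v2)\<bar>
           \<le> 2 * norm v1 * norm v2 * norm v / t \<and>
         \<bar>laplacian (heat_sg t h) (x + v) - laplacian (heat_sg t h) x\<bar>
           \<le> 2 * real CARD('n) / t * norm v"
proof
  show "\<bar>hs_inner (hessian (heat_sg t h) (x + v) - hessian (heat_sg t h) x) (outer v1 v2)\<bar>
           \<le> 2 * norm v1 * norm v2 * norm v / t"
    by (rule main_hs[OF assms])
  have each: "\<bar>hessian (heat_sg t h) (x + v) $ i $ i - hessian (heat_sg t h) x $ i $ i\<bar> \<le> 2 * norm v / t" for i
    using main_hs[OF assms, of x v "axis i 1" "axis i 1"] by (simp add: hs_axis)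
  have "\<bar>laplacian (heat_sg t h) (x + v) - laplacian (heat_sg t h) x\<bar>
      = \<bar>\<Sum>i\<in>UNIV. hessian (heat_sg t h) (x + v) $ i $ i - hessian (heat_sg t h) x $ i $ i\<bar>"
    by (simp add: laplacian_def sum_subtractf)
  also have "\<dots> \<le> (\<Sum>i\<in>UNIV. \<bar>hessian (heat_sg t h) (x + v) $ i $ i - hessian (heat_sg t h) x $ i $ i\<bar>)"
    by (rule sum_abs)
  also have "\<dots> \<le> (\<Sum>i\<in>(UNIV::'n set). 2 * norm v / t)"
    by (rule sum_mono) (rule each)
  also have "\<dots> = 2 * real CARD('n) / t * norm v" by simp
  finally show "\<bar>laplacian (heat_sg t h) (x + v) - laplacian (heat_sg t h) x\<bar>
           \<le> 2 * real CARD('n) / t * norm v" .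
qed

end
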